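(* Fix $n\ge 1$. Let $T=P(x,u_0,\dots,u_n)$ with $P$ a real polynomial, and let $Q$ be the (unique) real polynomial with $T=Q(x,v_0,\dots,v_n)$. Then $P$ does not depend on $x$ if and only if, on the region $u_n\neq0$, $$T=Q(\xi,I_n,I_{n-1},\dots,I_2,0,I_0),$$ i.e. $T$ is obtained from $Q$ by substituting $x\mapsto\xi$ and $v_j\mapsto I_{n-j}$ (with $I_1=0$). In this case, if $T\ne 0$, the deficiency of $T$ relative to $\mathcal P_n$ equals $n$ minus the degree in $\xi$ of $Q(\xi,I_n,\dots,I_2,0,I_0)$, regarded as a polynomial in the algebraically independent quantities $\xi,I_0,I_2,\dots,I_n$.
   Context: Operators are elements of $\mathbb R[x,u_0,\dots,u_n]$ acting on smooth $f$ by $P[f](x)=P(x,f(x),f'(x),\dots,f^{(n)}(x))$. $\mathcal P_s$ denotes real polynomials of degree $\le s$ ($\mathcal P_s=\{0\}$ for $s<0$); deficiency $m$ relative to $\mathcal P_n$ means $T(\mathcal P_n)\subset\mathcal P_{n-m}$ but $T(\mathcal P_n)\not\subset\mathcal P_{n-m-1}$. Define $v_j=\sum_{i=0}^{n-j}(-1)^i\frac{x^i}{i!}u_{i+j}$ for $j=0,\dots,n$; $x,v_0,\dots,v_n$ freely generate $\mathbb R[x,u_0,\dots,u_n]$. On the region $u_n\ne0$ define $\xi=u_{n-1}/u_n$ and $I_{n-j}=\sum_{i=0}^{n-j}(-1)^i u_{i+j}\frac{\xi^i}{i!}$ for $j=0,\dots,n$; thus $I_0=u_n$ and $I_1=0$.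 *)

theory Defs
  imports "HOL-Analysis.Analysis" "HOL-Computational_Algebra.Polynomial" "HOL-Library.Poly_Mapping"
begin

text \<open>Variable 0 plays the role of x; variable Suc i plays the role of u_i (for P),
resp. v_i (for Q).\<close>

type_synonym mpoly = "(nat \<Rightarrow>\<^sub>0 nat) \<Rightarrow>\<^sub>0 real"

definition mp_eval :: "mpoly \<Rightarrow> (nat \<Rightarrow> real) \<Rightarrow> real" where
  "mp_eval p a = (\<Sum>m\<in>Poly_Mapping.keys p. Poly_Mapping.lookup p m * (\<Prod>i\<in>Poly_Mapping.keys (m::nat \<Rightarrow>\<^sub>0 nat). a i ^ Poly_Mapping.lookup m i))"

definition mp_vars_le :: "nat \<Rightarrow> mpoly \<Rightarrow> bool" where
  "mp_vars_le n p \<longleftrightarrow> (\<forall>m\<in>Poly_Mapping.keys p. Poly_Mapping.keys m \<subseteq> {0..Suc n})"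

definition indep_x :: "mpoly \<Rightarrow> bool" where
  "indep_x p \<longleftrightarrow> (\<forall>m\<in>Poly_Mapping.keys p. Poly_Mapping.lookup m 0 = 0)"

definition vfun :: "nat \<Rightarrow> real \<Rightarrow> (nat \<Rightarrow> real) \<Rightarrow> nat \<Rightarrow> real" where
  "vfun n x u j = (\<Sum>i=0..n-j. (-1)^i * x^i / fact i * u (i+j))"

definition xi :: "nat \<Rightarrow> (nat \<Rightarrow> real) \<Rightarrow> real" where
  "xi n u = u (n-1) / u n"

text \<open>I_{n-j} = sum_{i=0}^{n-j} (-1)^i u_{i+j} xi^i/i!, indexed by k = n-j.\<close>
definition Ifun :: "nat \<Rightarrow> (nat \<Rightarrow> real) \<Rightarrow> nat \<Rightarrow> real" where
  "Ifun n u k = (\<Sum>i=0..k. (-1)^i * u (i + (n-k)) * xi n u ^ i / fact i)"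

definition apply_op :: "mpoly \<Rightarrow> (real \<Rightarrow> real) \<Rightarrow> real \<Rightarrow> real" where
  "apply_op P f = (\<lambda>x. mp_eval P (case_nat x (\<lambda>i. (deriv ^^ i) f x)))"

text \<open>P_s: real polynomial functions of degree \<le> s; P_s = {0} for s < 0.\<close>
definition polys_upto :: "int \<Rightarrow> (real \<Rightarrow> real) set" where
  "polys_upto s = {poly p | p. p = 0 \<or> int (degree p) \<le> s}"

definition has_deficiency :: "nat \<Rightarrow> mpoly \<Rightarrow> int \<Rightarrow> bool" where
  "has_deficiency n P m \<longleftrightarrow>
     apply_op P ` polys_upto (int n) \<subseteq> polys_upto (int n - m) \<and>
     \<not> apply_op P ` polys_upto (int n) \<subseteq> polys_upto (int n - m - 1)"

text \<open>Degree in xi of Q(xi, I_n, ..., I_2, 0, I_0), regarded as a formal polynomial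
in the independent variables xi, I_0, I_2, ..., I_n: the substitution renames
x to xi and v_j to I_{n-j} for j \<noteq> n-1 and sets v_{n-1} (variable index n) to 0,
which deletes exactly the monomials of Q containing v_{n-1}.\<close>
definition xi_degree :: "nat \<Rightarrow> mpoly \<Rightarrow> nat" where
  "xi_degree n Q = Max (insert 0 {Poly_Mapping.lookup m 0 | m. m \<in> Poly_Mapping.keys Q \<and> Poly_Mapping.lookup m n = 0})"

end

theory Submission
  imports Defs
begin

definition ev :: "(nat \<Rightarrow>\<^sub>0 nat) \<Rightarrow> (nat \<Rightarrow> real) \<Rightarrow> real" where
  "ev m a = (\<Prod>i\<in>Poly_Mapping.keys m. a i ^ Poly_Mapping.lookup m i)"

lemma mp_eval_ev: "mp_eval p a = (\<Sum>m\<in>Poly_Mapping.keys p. Poly_Mapping.lookup p m * ev m a)"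
  unfolding mp_eval_def ev_def by simp

lemma digits_unique:
  fixes N :: nat
  assumes "\<forall>i. g i < N" "\<forall>i. h i < N"
  shows "(\<Sum>i<K. g i * N^i) = (\<Sum>i<K. h i * N^i) \<Longrightarrow> i < K \<Longrightarrow> g i = h i"
  using assms
proof (induction K arbitrary: g h i)
  case 0 then show ?case by simp
next
  case (Suc K)
  have N0: "N > 0" using Suc.prems(3) by (metis gr_zeroI not_less0)
  have e: "\<And>f. (\<Sum>i<Suc K. f i * N^i) = f 0 + N * (\<Sum>i<K. f (Suc i) * N^i)"
    by (simp only: sum.lessThan_Suc_shift) (simp add: sum_distrib_left mult_ac)
  have E: "g 0 + N * (\<Sum>i<K. g (Suc i) * N^i) = h 0 + N * (\<Sum>i<K. h (Suc i) * N^i)"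
    using Suc.prems(1) e by metis
  have g0: "g 0 = h 0"
  proof -
    have "(g 0 + N * (\<Sum>i<K. g (Suc i) * N^i)) mod N = g 0" using Suc.prems(3) by simp
    moreover have "(h 0 + N * (\<Sum>i<K. h (Suc i) * N^i)) mod N = h 0" using Suc.prems(4) by simp
    ultimately show ?thesis using E by simp
  qed
  have "(\<Sum>i<K. g (Suc i) * N^i) = (\<Sum>i<K. h (Suc i) * N^i)"
    using E g0 N0 by simp
  then have IH: "\<And>j. j < K \<Longrightarrow> g (Suc j) = h (Suc j)"
    using Suc.IH[of "\<lambda>i. g (Suc i)" "\<lambda>i. h (Suc i)"] Suc.prems by auto
  show ?case
  proof (cases i)
    case 0 then show ?thesis using g0 by simp
  next
    case (Suc j) then show ?thesis using IH Suc.prems(2) by simp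
  qed
qed

lemma identity:
  fixes S :: "(nat \<Rightarrow>\<^sub>0 nat) set" and c :: "(nat \<Rightarrow>\<^sub>0 nat) \<Rightarrow> real"
  assumes fin: "finite S"
    and van: "\<And>a. (\<forall>i. a i > 0) \<Longrightarrow> (\<Sum>m\<in>S. c m * ev m a) = 0"
    and m0: "m0 \<in> S"
  shows "c m0 = 0"
proof -
  define N where "N = Suc (\<Sum>m\<in>S. \<Sum>i\<in>Poly_Mapping.keys m. Poly_Mapping.lookup m i)"
  define K where "K = Suc (\<Sum>m\<in>S. \<Sum>i\<in>Poly_Mapping.keys m. i)"
  have ltN: "Poly_Mapping.lookup m i < N" if "m \<in> S" for m i
  proof (cases "i \<in> Poly_Mapping.keys m")
    case True
    have "Poly_Mapping.lookup m i \<le> (\<Sum>i\<in>Poly_Mapping.keys m. Poly_Mapping.lookup m i)"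
      using True by (intro member_le_sum) auto
    also have "\<dots> \<le> (\<Sum>m\<in>S. \<Sum>i\<in>Poly_Mapping.keys m. Poly_Mapping.lookup m i)"
      using that fin by (intro member_le_sum) auto
    finally show ?thesis unfolding N_def by simp
  next
    case False then show ?thesis unfolding N_def by (simp add: in_keys_iff)
  qed
  have ltK: "i < K" if "m \<in> S" "i \<in> Poly_Mapping.keys m" for m i
  proof -
    have "i \<le> (\<Sum>i\<in>Poly_Mapping.keys m. i)"
      using that by (intro member_le_sum) auto
    also have "\<dots> \<le> (\<Sum>m\<in>S. \<Sum>i\<in>Poly_Mapping.keys m. i)"
      using that fin by (subst sum.remove[of S m]) auto
    finally show ?thesis unfolding K_def by simp
  qed
  define enc where "enc m = (\<Sum>i<K. Poly_Mapping.lookup m i * N^i)" for m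
  have enc_inj: "m = m'" if "m \<in> S" "m' \<in> S" "enc m = enc m'" for m m'
  proof (rule poly_mapping_eqI)
    fix k
    show "Poly_Mapping.lookup m k = Poly_Mapping.lookup m' k"
    proof (cases "k < K")
      case True
      then show ?thesis
        using digits_unique[of "Poly_Mapping.lookup m" N "Poly_Mapping.lookup m'" K k] that ltN
        unfolding enc_def by blast
    next
      case False
      then have "k \<notin> Poly_Mapping.keys m" "k \<notin> Poly_Mapping.keys m'" using ltK that by auto
      then show ?thesis by (simp add: in_keys_iff)
    qed
  qed
  have ev_enc: "ev m (\<lambda>i. t ^ (N^i)) = t ^ enc m" if "m \<in> S" for m and t :: real
  proof -
    have "ev m (\<lambda>i. t ^ (N^i)) = (\<Prod>i\<in>Poly_Mapping.keys m. t ^ (Poly_Mapping.lookup m i * N^i))"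
      unfolding ev_def by (simp add: power_mult[symmetric] mult.commute)
    also have "\<dots> = (\<Prod>i<K. t ^ (Poly_Mapping.lookup m i * N^i))"
      using that ltK by (intro prod.mono_neutral_left) (auto simp: in_keys_iff)
    also have "\<dots> = t ^ enc m" unfolding enc_def by (simp add: power_sum)
    finally show ?thesis .
  qed
  define q where "q = (\<Sum>m\<in>S. monom (c m) (enc m))"
  have "poly q t = 0" if "t > 0" for t :: real
  proof -
    have "poly q t = (\<Sum>m\<in>S. c m * t ^ enc m)"
      unfolding q_def by (simp add: poly_sum poly_monom)
    also have "\<dots> = (\<Sum>m\<in>S. c m * ev m (\<lambda>i. t ^ (N^i)))"
      by (intro sum.cong) (auto simp: ev_enc)
    also have "\<dots> = 0" using van[of "\<lambda>i. t ^ (N^i)"] that by simp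
    finally show ?thesis .
  qed
  then have "q = 0"
  proof -
    assume h: "\<And>t::real. t > 0 \<Longrightarrow> poly q t = 0"
    show "q = 0"
    proof (rule ccontr)
      assume "q \<noteq> 0"
      then have "finite {x. poly q x = 0}" by (rule poly_roots_finite)
      moreover have "{0<..} \<subseteq> {x. poly q x = (0::real)}" using h by auto
      ultimately have "finite {0::real<..}" by (rule finite_subset[rotated])
      then show False using infinite_Ioi by auto
    qed
  qed
  then have "coeff q (enc m0) = 0" by simp
  moreover have "coeff q (enc m0) = c m0"
  proof -
    have "coeff q (enc m0) = (\<Sum>m\<in>S. if enc m = enc m0 then c m else 0)"
      unfolding q_def by (simp add: coeff_sum coeff_monom)
    also have "\<dots> = (\<Sum>m\<in>S. if m = m0 then c m else 0)"
      by (intro sum.cong refl) (use enc_inj m0 in auto)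
    also have "\<dots> = c m0" using fin m0 by simp
    finally show ?thesis .
  qed
  ultimately show ?thesis by simp
qed

lemma deriv_funpow_poly: "(deriv^^i) (poly p) = poly ((pderiv^^i) p)"
proof (induction i)
  case 0 then show ?case by simp
next
  case (Suc i)
  show ?case using Suc by (auto intro!: DERIV_imp_deriv poly_DERIV)
qed

lemma coeff_pderiv_funpow:
  "coeff ((pderiv^^j) p) k = fact (k+j) / fact k * coeff (p::real poly) (k+j)"
proof (induction j arbitrary: k)
  case 0 then show ?case by simp
next
  case (Suc j)
  have "coeff ((pderiv^^Suc j) p) k = of_nat (Suc k) * coeff ((pderiv^^j) p) (Suc k)"
    by (simp add: coeff_pderiv)
  also have "\<dots> = of_nat (Suc k) * (fact (Suc k + j) / fact (Suc k) * coeff p (Suc k + j))"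
    using Suc by simp
  also have "\<dots> = fact (k + Suc j) / fact k * coeff p (k + Suc j)"
  proof -
    have e1: "Suc k + j = k + Suc j" by simp
    have e2: "fact (Suc k) = (of_nat (Suc k) * fact k :: real)" by (rule fact_Suc)
    have e3: "(of_nat (Suc k) :: real) \<noteq> 0" by (rule of_nat_neq_0)
    show ?thesis unfolding e1 e2 using e3 by (simp del: fact_Suc of_nat_Suc)
  qed
  finally show ?case .
qed

lemma poly0_pderiv_funpow: "poly ((pderiv^^j) p) 0 = fact j * coeff (p::real poly) j"
  by (simp add: poly_0_coeff_0 coeff_pderiv_funpow)

lemma taylor_deriv:
  "((\<lambda>x. \<Sum>i\<le>k. (-1)^i / fact i * x^i * poly ((pderiv^^i) g) x) has_real_derivative
     ((-1)^k / fact k * x^k * poly ((pderiv^^(Suc k)) g) x)) (at x)"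
proof (induction k)
  case 0 then show ?case by (simp add: poly_DERIV)
next
  case (Suc k)
  define G where "G = (pderiv^^(Suc k)) g"
  define C :: real where "C = (-1)^(Suc k) / fact (Suc k)"
  have d1: "((\<lambda>x. C * x^(Suc k)) has_real_derivative (C * (of_nat (Suc k) * x^k))) (at x)"
    by (rule DERIV_cmult) (use DERIV_pow[of "Suc k" x] in simp)
  have t: "((\<lambda>x. C * x^(Suc k) * poly G x) has_real_derivative
      (C * (of_nat (Suc k) * x^k)) * poly G x + (C * x^(Suc k)) * poly (pderiv G) x) (at x)"
    by (rule DERIV_mult[OF d1 poly_DERIV, THEN DERIV_cong]) (simp add: algebra_simps)
  have "((\<lambda>x. \<Sum>i\<le>Suc k. (-1)^i / fact i * x^i * poly ((pderiv^^i) g) x) has_real_derivative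
     ((-1)^k / fact k * x^k * poly G x) +
      ((C * (of_nat (Suc k) * x^k)) * poly G x + (C * x^(Suc k)) * poly (pderiv G) x)) (at x)"
    unfolding sum.atMost_Suc using Suc t unfolding G_def C_def by (rule DERIV_add)
  moreover have "((-1)^k / fact k * x^k * poly G x) +
      ((C * (of_nat (Suc k) * x^k)) * poly G x + (C * x^(Suc k)) * poly (pderiv G) x)
      = (C * x^(Suc k)) * poly (pderiv G) x"
  proof -
    have e2: "fact (Suc k) = (of_nat (Suc k) * fact k :: real)" by (rule fact_Suc)
    have e3: "(of_nat (Suc k) :: real) \<noteq> 0" by (rule of_nat_neq_0)
    have h: "C * of_nat (Suc k) = - ((-1)^k / fact k)"
      unfolding C_def e2 using e3 by (simp del: fact_Suc of_nat_Suc)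
    have "C * (of_nat (Suc k) * x^k) * poly G x = (C * of_nat (Suc k)) * (x^k * poly G x)"
      by (simp only: mult_ac)
    also have "\<dots> = - ((-1)^k / fact k * x^k * poly G x)" unfolding h by simp
    finally show ?thesis by simp
  qed
  ultimately show ?case unfolding G_def C_def by simp
qed

lemma taylor0:
  fixes g :: "real poly" and x :: real
  assumes "degree g \<le> k"
  shows "(\<Sum>i\<le>k. (-1)^i / fact i * x^i * poly ((pderiv^^i) g) x) = poly g 0"
proof -
  have z: "(pderiv^^(Suc k)) g = 0"
  proof -
    have "coeff ((pderiv^^(Suc k)) g) j = 0" for j
      using assms by (simp only: coeff_pderiv_funpow) (simp add: coeff_eq_0)
    then show ?thesis by (simp add: poly_eq_iff)
  qed
  have "\<forall>x. ((\<lambda>x. \<Sum>i\<le>k. (-1)^i / fact i * x^i * poly ((pderiv^^i) g) x) has_real_derivative 0) (at x)"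
    using taylor_deriv[where k=k and g=g] z by simp
  then have "(\<Sum>i\<le>k. (-1)^i / fact i * x^i * poly ((pderiv^^i) g) x)
     = (\<Sum>i\<le>k. (-1)^i / fact i * 0^i * poly ((pderiv^^i) g) 0)"
    by (rule DERIV_isconst_all)
  also have "\<dots> = poly g 0"
    by (simp add: zero_power sum.atMost_shift del: sum.atMost_Suc) 
  finally show ?thesis .
qed

lemma pderiv_funpow_pcompose:
  "(pderiv^^i) (pcompose p [:s, 1:]) = pcompose ((pderiv^^i) p) [:s, 1:]"
  by (induction i) (auto simp: pderiv_pcompose pderiv_pCons)

lemma ev_cong: "(\<And>i. i \<in> Poly_Mapping.keys m \<Longrightarrow> a i = b i) \<Longrightarrow> ev m a = ev m b"
  unfolding ev_def by (intro prod.cong) auto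

lemma mp_eval_cong:
  "(\<And>m i. m \<in> Poly_Mapping.keys p \<Longrightarrow> i \<in> Poly_Mapping.keys m \<Longrightarrow> a i = b i)
   \<Longrightarrow> mp_eval p a = mp_eval p b"
  unfolding mp_eval_ev by (intro sum.cong refl arg_cong2[where f="(*)"] ev_cong) auto

lemma case_nat_split: "case_nat (a 0) (\<lambda>j. a (Suc j)) = a"
  by (rule ext) (simp split: nat.split)

lemma indep_eval:
  assumes "indep_x p"
  shows "mp_eval p (case_nat x u) = mp_eval p (case_nat y u)"
proof (rule mp_eval_cong)
  fix m i assume "m \<in> Poly_Mapping.keys p" "i \<in> Poly_Mapping.keys m"
  then have "i \<noteq> 0" using assms unfolding indep_x_def by (metis in_keys_iff)
  then show "case_nat x u i = case_nat y u i" by (cases i) auto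
qed

lemma vfun_Ifun: "j \<le> n \<Longrightarrow> vfun n (xi n u) u j = Ifun n u (n - j)"
  unfolding vfun_def Ifun_def by (intro sum.cong) (auto simp: algebra_simps)

lemma forward:
  assumes varsQ: "mp_vars_le n Q"
    and PQ: "\<forall>x u. mp_eval P (case_nat x u) = mp_eval Q (case_nat x (vfun n x u))"
    and ind: "indep_x P"
  shows "mp_eval P (case_nat x u) = mp_eval Q (case_nat (xi n u) (\<lambda>j. Ifun n u (n - j)))"
proof -
  have "mp_eval P (case_nat x u) = mp_eval P (case_nat (xi n u) u)" by (rule indep_eval[OF ind])
  also have "\<dots> = mp_eval Q (case_nat (xi n u) (vfun n (xi n u) u))" using PQ by blast
  also have "\<dots> = mp_eval Q (case_nat (xi n u) (\<lambda>j. Ifun n u (n - j)))"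
  proof (rule mp_eval_cong)
    fix m i assume "m \<in> Poly_Mapping.keys Q" "i \<in> Poly_Mapping.keys m"
    then have "i \<in> {0..Suc n}" using varsQ unfolding mp_vars_le_def by blast
    then have "i \<le> Suc n" by simp
    then show "case_nat (xi n u) (vfun n (xi n u) u) i = case_nat (xi n u) (\<lambda>j. Ifun n u (n - j)) i"
      by (cases i) (auto simp: vfun_Ifun)
  qed
  finally show ?thesis .
qed

lemma backward:
  assumes varsQ: "mp_vars_le n Q"
    and PQ: "\<forall>x u. mp_eval P (case_nat x u) = mp_eval Q (case_nat x (vfun n x u))"
    and H: "\<forall>x u. u n \<noteq> 0 \<longrightarrow>
              mp_eval P (case_nat x u) = mp_eval Q (case_nat (xi n u) (\<lambda>j. Ifun n u (n - j)))"
  shows "indep_x P"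
proof -
  have inv: "mp_eval P (case_nat x u) = mp_eval P (case_nat y u)" if "u n \<noteq> 0" for x y u
    using H that by metis
  define S where "S = {m \<in> Poly_Mapping.keys P. Poly_Mapping.lookup m 0 \<noteq> 0}"
  have finS: "finite S" unfolding S_def by simp
  have van: "(\<Sum>m\<in>S. Poly_Mapping.lookup P m * ev m a) = 0" if pos: "\<forall>i. a i > 0" for a
  proof -
    define u where "u = (\<lambda>j. a (Suc j))"
    have un: "u n \<noteq> 0" unfolding u_def using pos by (metis less_irrefl)
    have a1: "case_nat (a 0) u = a" unfolding u_def by (rule case_nat_split)
    have a2: "case_nat 0 u = a(0 := 0)" unfolding u_def by (rule ext) (simp split: nat.split)
    have "mp_eval P a = mp_eval P (a(0:=0))" using inv[where u=u and x="a 0" and y=0] un a1 a2 by simp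
    moreover have "ev m (a(0:=0)) = (if Poly_Mapping.lookup m 0 = 0 then ev m a else 0)" for m
    proof (cases "Poly_Mapping.lookup m 0 = 0")
      case True
      then show ?thesis by (auto intro!: ev_cong simp: in_keys_iff)
    next
      case False
      then have "0 \<in> Poly_Mapping.keys m" by (simp add: in_keys_iff)
      then show ?thesis using False unfolding ev_def
        by (auto intro!: prod_zero bexI[of _ 0])
    qed
    ultimately have "(\<Sum>m\<in>Poly_Mapping.keys P. Poly_Mapping.lookup P m * ev m a)
        = (\<Sum>m\<in>Poly_Mapping.keys P. Poly_Mapping.lookup P m * (if Poly_Mapping.lookup m 0 = 0 then ev m a else 0))"
      unfolding mp_eval_ev by simp
    moreover have "(\<Sum>m\<in>Poly_Mapping.keys P. Poly_Mapping.lookup P m * ev m a)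
        = (\<Sum>m\<in>Poly_Mapping.keys P. Poly_Mapping.lookup P m * (if Poly_Mapping.lookup m 0 = 0 then ev m a else 0))
        + (\<Sum>m\<in>Poly_Mapping.keys P. (if Poly_Mapping.lookup m 0 \<noteq> 0 then Poly_Mapping.lookup P m * ev m a else 0))"
      by (simp only: sum.distrib[symmetric]) (intro sum.cong refl, simp)
    ultimately have "(\<Sum>m\<in>Poly_Mapping.keys P. (if Poly_Mapping.lookup m 0 \<noteq> 0 then Poly_Mapping.lookup P m * ev m a else 0)) = 0"
      by linarith
    then show ?thesis unfolding S_def by (simp add: sum.inter_filter)
  qed
  have "S = {}"
  proof (rule ccontr)
    assume "S \<noteq> {}"
    then obtain m where m: "m \<in> S" by blast
    have "Poly_Mapping.lookup P m = 0" by (rule identity[OF finS van m]) 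
    moreover have "m \<in> Poly_Mapping.keys P" using m unfolding S_def by simp
    ultimately show False by (simp add: in_keys_iff)
  qed
  then show ?thesis unfolding indep_x_def S_def by auto
qed

definition evr :: "(nat \<Rightarrow>\<^sub>0 nat) \<Rightarrow> (nat \<Rightarrow> real) \<Rightarrow> real" where
  "evr m c = (\<Prod>i\<in>Poly_Mapping.keys m - {0}. c (i - 1) ^ Poly_Mapping.lookup m i)"

definition QX :: "mpoly \<Rightarrow> (nat \<Rightarrow> real) \<Rightarrow> real poly" where
  "QX Q c = (\<Sum>m\<in>Poly_Mapping.keys Q. monom (Poly_Mapping.lookup Q m * evr m c) (Poly_Mapping.lookup m 0))"

lemma ev_case: "ev m (case_nat x c) = x ^ Poly_Mapping.lookup m 0 * evr m c"
proof (cases "0 \<in> Poly_Mapping.keys m")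
  case True
  have "ev m (case_nat x c) = case_nat x c 0 ^ Poly_Mapping.lookup m 0 *
        (\<Prod>i\<in>Poly_Mapping.keys m - {0}. case_nat x c i ^ Poly_Mapping.lookup m i)"
    unfolding ev_def using True by (simp add: prod.remove)
  also have "(\<Prod>i\<in>Poly_Mapping.keys m - {0}. case_nat x c i ^ Poly_Mapping.lookup m i) = evr m c"
    unfolding evr_def by (intro prod.cong refl) (auto split: nat.split)
  finally show ?thesis by simp
next
  case False
  then have "Poly_Mapping.lookup m 0 = 0" by (simp add: in_keys_iff)
  moreover have "ev m (case_nat x c) = evr m c"
    unfolding ev_def evr_def using False by (intro prod.cong) (auto split: nat.split)
  ultimately show ?thesis by simp
qed

lemma ev_pos: "ev m a = a 0 ^ Poly_Mapping.lookup m 0 * evr m (\<lambda>j. a (Suc j))"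
  using ev_case[of m "a 0" "\<lambda>j. a (Suc j)"] by (simp add: case_nat_split)

lemma poly_QX: "poly (QX Q c) x = mp_eval Q (case_nat x c)"
  unfolding QX_def mp_eval_ev by (simp add: poly_sum poly_monom ev_case mult_ac)

lemma coeff_QX: "coeff (QX Q c) k =
   (\<Sum>m\<in>{m\<in>Poly_Mapping.keys Q. Poly_Mapping.lookup m 0 = k}. Poly_Mapping.lookup Q m * evr m c)"
  unfolding QX_def by (simp add: coeff_sum coeff_monom sum.inter_filter eq_commute)

lemma degree_QX: "(\<And>m. m \<in> Poly_Mapping.keys Q \<Longrightarrow> Poly_Mapping.lookup m 0 \<le> D) \<Longrightarrow> degree (QX Q c) \<le> D"
  unfolding QX_def by (intro degree_sum_le) (auto intro: order.trans[OF degree_monom_le])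

lemma QX_cong:
  assumes "mp_vars_le n Q" "\<And>j. j \<le> n \<Longrightarrow> c j = c' j"
  shows "QX Q c = QX Q c'"
  unfolding QX_def
proof (intro sum.cong refl arg_cong2[where f=monom] arg_cong2[where f="(*)"])
  fix m assume m: "m \<in> Poly_Mapping.keys Q"
  show "evr m c = evr m c'" unfolding evr_def
  proof (intro prod.cong refl arg_cong2[where f="(^)"])
    fix i assume "i \<in> Poly_Mapping.keys m - {0}"
    then have "i \<in> {0..Suc n}" using assms(1) m unfolding mp_vars_le_def by blast
    then show "c (i - 1) = c' (i - 1)" using assms(2) by simp
  qed
qed

definition cp :: "real poly \<Rightarrow> nat \<Rightarrow> real" where
  "cp p j = poly ((pderiv^^j) p) 0"

lemma degree_pderiv_funpow: "degree ((pderiv^^j) (p::real poly)) \<le> degree p - j"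
  by (rule degree_le) (auto simp: coeff_pderiv_funpow coeff_eq_0)

lemma vfun_taylor:
  assumes "degree p \<le> n" "j \<le> n"
  shows "vfun n x (\<lambda>i. poly ((pderiv^^i) p) x) j = cp p j"
proof -
  have d: "degree ((pderiv^^j) p) \<le> n - j"
    using degree_pderiv_funpow[of j p] assms by linarith
  have "vfun n x (\<lambda>i. poly ((pderiv^^i) p) x) j
      = (\<Sum>i\<le>n-j. (-1)^i / fact i * x^i * poly ((pderiv^^i) ((pderiv^^j) p)) x)"
    unfolding vfun_def atLeast0AtMost
    by (intro sum.cong refl) (simp add: funpow_add)
  also have "\<dots> = cp p j" unfolding cp_def by (rule taylor0[OF d])
  finally show ?thesis .
qed

lemma applyop:
  assumes varsQ: "mp_vars_le n Q"
    and PQ: "\<forall>x u. mp_eval P (case_nat x u) = mp_eval Q (case_nat x (vfun n x u))"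
    and deg: "degree p \<le> n"
  shows "apply_op P (poly p) = poly (QX Q (cp p))"
proof (rule ext)
  fix x
  have "apply_op P (poly p) x = mp_eval P (case_nat x (\<lambda>i. poly ((pderiv^^i) p) x))"
    unfolding apply_op_def deriv_funpow_poly by simp
  also have "\<dots> = mp_eval Q (case_nat x (vfun n x (\<lambda>i. poly ((pderiv^^i) p) x)))"
    using PQ by blast
  also have "\<dots> = mp_eval Q (case_nat x (cp p))"
  proof (rule mp_eval_cong)
    fix m i assume "m \<in> Poly_Mapping.keys Q" "i \<in> Poly_Mapping.keys m"
    then have "i \<in> {0..Suc n}" using varsQ unfolding mp_vars_le_def by blast
    then show "case_nat x (vfun n x (\<lambda>i. poly ((pderiv^^i) p) x)) i = case_nat x (cp p) i"
      using deg by (cases i) (auto simp: vfun_taylor)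
  qed
  also have "\<dots> = poly (QX Q (cp p)) x" by (simp add: poly_QX)
  finally show "apply_op P (poly p) x = poly (QX Q (cp p)) x" .
qed

definition Fc :: "nat \<Rightarrow> (nat \<Rightarrow> real) \<Rightarrow> real poly" where
  "Fc n c = (\<Sum>j\<le>n. monom (c j / fact j) j)"

lemma coeff_Fc: "coeff (Fc n c) j = (if j \<le> n then c j / fact j else 0)"
  unfolding Fc_def by (simp add: coeff_sum coeff_monom)

lemma degree_Fc: "degree (Fc n c) \<le> n"
  by (rule degree_le) (simp add: coeff_Fc)

lemma cp_Fc: "j \<le> n \<Longrightarrow> cp (Fc n c) j = c j"
  unfolding cp_def poly0_pderiv_funpow coeff_Fc by simp

lemma translate:
  assumes varsQ: "mp_vars_le n Q"
    and PQ: "\<forall>x u. mp_eval P (case_nat x u) = mp_eval Q (case_nat x (vfun n x u))"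
    and ind: "indep_x P"
    and deg: "degree p \<le> n"
  shows "QX Q (cp (pcompose p [:s, 1:])) = pcompose (QX Q (cp p)) [:s, 1:]"
proof -
  define p' where "p' = pcompose p [:s, 1:]"
  have deg': "degree p' \<le> n" unfolding p'_def using deg by (simp add: degree_pcompose)
  have "poly (QX Q (cp p')) x = poly (pcompose (QX Q (cp p)) [:s, 1:]) x" for x
  proof -
    have "poly (QX Q (cp p')) x = apply_op P (poly p') x"
      using applyop[OF varsQ PQ deg'] by simp
    also have "\<dots> = mp_eval P (case_nat x (\<lambda>i. poly ((pderiv^^i) p) (s + x)))"
      unfolding apply_op_def deriv_funpow_poly p'_def pderiv_funpow_pcompose
      by (simp add: poly_pcompose)
    also have "\<dots> = mp_eval P (case_nat (s + x) (\<lambda>i. poly ((pderiv^^i) p) (s + x)))"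
      by (rule indep_eval[OF ind])
    also have "\<dots> = apply_op P (poly p) (s + x)"
      unfolding apply_op_def deriv_funpow_poly by simp
    also have "\<dots> = poly (pcompose (QX Q (cp p)) [:s, 1:]) x"
      using applyop[OF varsQ PQ deg] by (simp add: poly_pcompose)
    finally show ?thesis .
  qed
  then show ?thesis unfolding p'_def by (simp add: poly_eq_poly_eq_iff[symmetric] fun_eq_iff)
qed

lemma coeff_vanish_false:
  assumes H: "\<forall>c. c n \<noteq> 0 \<longrightarrow> coeff (QX Q c) k = 0"
    and m: "m \<in> Poly_Mapping.keys Q" and mk: "Poly_Mapping.lookup m 0 = k"
  shows False
proof -
  define S where "S = {m\<in>Poly_Mapping.keys Q. Poly_Mapping.lookup m 0 = k}"
  have van: "(\<Sum>m\<in>S. Poly_Mapping.lookup Q m * ev m a) = 0" if pos: "\<forall>i. a i > 0" for a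
  proof -
    have "(\<Sum>m\<in>S. Poly_Mapping.lookup Q m * ev m a)
        = (\<Sum>m\<in>S. a 0 ^ k * (Poly_Mapping.lookup Q m * evr m (\<lambda>j. a (Suc j))))"
      unfolding S_def by (intro sum.cong refl) (simp add: ev_pos)
    also have "\<dots> = a 0 ^ k * coeff (QX Q (\<lambda>j. a (Suc j))) k"
      unfolding coeff_QX S_def by (simp add: sum_distrib_left)
    also have "\<dots> = 0" using H pos by (metis less_irrefl mult_zero_right)
    finally show ?thesis .
  qed
  have "Poly_Mapping.lookup Q m = 0"
    by (rule identity[OF _ van]) (auto simp: S_def m mk)
  then show False using m by (simp add: in_keys_iff)
qed

lemma key:
  assumes n1: "n \<ge> 1"
    and varsQ: "mp_vars_le n Q"
    and PQ: "\<forall>x u. mp_eval P (case_nat x u) = mp_eval Q (case_nat x (vfun n x u))"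
    and ind: "indep_x P"
    and ne: "Poly_Mapping.keys Q \<noteq> {}"
    and D: "D = Max ((\<lambda>m. Poly_Mapping.lookup m 0) ` Poly_Mapping.keys Q)"
  shows "\<exists>m\<in>Poly_Mapping.keys Q. Poly_Mapping.lookup m 0 = D \<and> Poly_Mapping.lookup m n = 0"
proof (rule ccontr)
  assume contra: "\<not> ?thesis"
  have leD: "Poly_Mapping.lookup m 0 \<le> D" if "m \<in> Poly_Mapping.keys Q" for m
    unfolding D using that by (intro Max_ge) auto
  have "D \<in> (\<lambda>m. Poly_Mapping.lookup m 0) ` Poly_Mapping.keys Q"
    unfolding D using ne by (intro Max_in) auto
  then obtain m0 where m0: "m0 \<in> Poly_Mapping.keys Q" "Poly_Mapping.lookup m0 0 = D" by auto
  have "\<forall>c. c n \<noteq> 0 \<longrightarrow> coeff (QX Q c) D = 0"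
  proof (intro allI impI)
    fix c :: "nat \<Rightarrow> real" assume cn: "c n \<noteq> 0"
    define p where "p = Fc n c"
    have degp: "degree p \<le> n" unfolding p_def by (rule degree_Fc)
    have QXc: "QX Q (cp p) = QX Q c"
      unfolding p_def by (rule QX_cong[OF varsQ]) (simp add: cp_Fc)
    define s where "s = - c (n-1) / c n"
    define p' where "p' = pcompose p [:s, 1:]"
    have cp0: "cp p' (n-1) = 0"
    proof -
      define G where "G = (pderiv^^(n-1)) p"
      have "cp p' (n-1) = poly G s"
        unfolding cp_def p'_def G_def pderiv_funpow_pcompose by (simp add: poly_pcompose)
      moreover have "G = [:c (n-1), c n:]"
      proof (rule poly_eqI)
        fix k
        have "coeff G k = fact (k + (n-1)) / fact k * coeff p (k + (n-1))"
          unfolding G_def by (rule coeff_pderiv_funpow)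
        moreover have "coeff [:c (n-1), c n:] k = (if k = 0 then c (n-1) else if k = 1 then c n else 0)"
          by (cases k) (auto simp: coeff_pCons split: nat.split)
        ultimately show "coeff G k = coeff [:c (n-1), c n:] k"
          using n1 unfolding p_def coeff_Fc
          by (cases "k = 0"; cases "k = 1") auto
      qed
      ultimately show ?thesis unfolding s_def using cn by (simp add: field_simps)
    qed
    have z: "coeff (QX Q (cp p')) D = 0"
      unfolding coeff_QX
    proof (intro sum.neutral ballI)
      fix m assume "m \<in> {m \<in> Poly_Mapping.keys Q. Poly_Mapping.lookup m 0 = D}"
      then have mQ: "m \<in> Poly_Mapping.keys Q" and mD: "Poly_Mapping.lookup m 0 = D" by auto
      have mn: "Poly_Mapping.lookup m n \<noteq> 0" using contra mQ mD by metis
      have "n \<in> Poly_Mapping.keys m - {0}" using mn n1 by (simp add: in_keys_iff)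
      then have "evr m (cp p') = 0" unfolding evr_def using mn cp0
        by (intro prod_zero) (auto intro!: bexI[of _ n])
      then show "Poly_Mapping.lookup Q m * evr m (cp p') = 0" by simp
    qed
    have tr: "QX Q (cp p') = pcompose (QX Q c) [:s, 1:]"
      unfolding p'_def using translate[OF varsQ PQ ind degp] QXc by simp
    show "coeff (QX Q c) D = 0"
    proof (rule ccontr)
      assume nz: "coeff (QX Q c) D \<noteq> 0"
      have dle: "degree (QX Q c) \<le> D" by (rule degree_QX) (rule leD)
      have dge: "D \<le> degree (QX Q c)" using nz by (rule le_degree)
      have dq: "degree (QX Q c) = D" using dle dge by simp
      have dc: "degree (pcompose (QX Q c) [:s, 1:]) = D" using dq by (simp add: degree_pcompose)
      have "coeff (pcompose (QX Q c) [:s, 1:]) D = lead_coeff (pcompose (QX Q c) [:s, 1:])"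
        using dc by simp
      also have "\<dots> = lead_coeff (QX Q c) * lead_coeff [:s, 1:] ^ degree (QX Q c)"
        by (rule lead_coeff_comp) simp
      also have "\<dots> = coeff (QX Q c) D" using dq by simp
      finally have "coeff (QX Q (cp p')) D \<noteq> 0" using tr nz by simp
      then show False using z by simp
    qed
  qed
  then show False using coeff_vanish_false m0 by blast
qed

theorem mainTheorem2:
  fixes n :: nat and P Q :: mpoly
  assumes n1: "n \<ge> 1"
    and varsP: "mp_vars_le n P"
    and varsQ: "mp_vars_le n Q"
    and PQ: "\<forall>x u. mp_eval P (case_nat x u) = mp_eval Q (case_nat x (vfun n x u))"
  shows "(indep_x P \<longleftrightarrow>
           (\<forall>x u. u n \<noteq> 0 \<longrightarrow>
              mp_eval P (case_nat x u) = mp_eval Q (case_nat (xi n u) (\<lambda>j. Ifun n u (n - j)))))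
       \<and> (indep_x P \<and> P \<noteq> 0 \<longrightarrow> has_deficiency n P (int n - int (xi_degree n Q)))"
proof (intro conjI impI)
  show "indep_x P \<longleftrightarrow>
           (\<forall>x u. u n \<noteq> 0 \<longrightarrow>
              mp_eval P (case_nat x u) = mp_eval Q (case_nat (xi n u) (\<lambda>j. Ifun n u (n - j))))"
    using forward[OF varsQ PQ] backward[OF varsQ PQ] by blast
next
  assume A: "indep_x P \<and> P \<noteq> 0"
  then have ind: "indep_x P" and P0: "P \<noteq> 0" by auto
  have kP: "Poly_Mapping.keys P \<noteq> {}" using P0 by simp
  then obtain mP where mP: "mP \<in> Poly_Mapping.keys P" by blast
  obtain a where apos: "\<forall>i. a i > 0" and aP: "mp_eval P a \<noteq> 0"
  proof -
    have "\<exists>a. (\<forall>i. a i > 0) \<and> mp_eval P a \<noteq> 0"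
    proof (rule ccontr)
      assume "\<not> ?thesis"
      then have H: "\<And>a. (\<forall>i. a i > 0) \<Longrightarrow> (\<Sum>m\<in>Poly_Mapping.keys P. Poly_Mapping.lookup P m * ev m a) = 0"
        unfolding mp_eval_ev by blast
      have "Poly_Mapping.lookup P mP = 0" using identity[OF _ H mP] by simp
      then show False using mP by (simp add: in_keys_iff)
    qed
    then show ?thesis using that by blast
  qed
  have kQ: "Poly_Mapping.keys Q \<noteq> {}"
  proof
    assume e: "Poly_Mapping.keys Q = {}"
    have "mp_eval P a = mp_eval P (case_nat (a 0) (\<lambda>j. a (Suc j)))" by (simp add: case_nat_split)
    also have "\<dots> = 0" using PQ e unfolding mp_eval_def by simp
    finally show False using aP by simp
  qed
  define D where "D = Max ((\<lambda>m. Poly_Mapping.lookup m 0) ` Poly_Mapping.keys Q)"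
  have leD: "Poly_Mapping.lookup m 0 \<le> D" if "m \<in> Poly_Mapping.keys Q" for m
    unfolding D_def using that by (intro Max_ge) auto
  obtain m1 where m1: "m1 \<in> Poly_Mapping.keys Q" "Poly_Mapping.lookup m1 0 = D" "Poly_Mapping.lookup m1 n = 0"
    using key[OF n1 varsQ PQ ind kQ D_def] by blast
  have xd: "xi_degree n Q = D"
    unfolding xi_degree_def
  proof (rule Max_eqI)
    have "{Poly_Mapping.lookup m 0 |m. m \<in> Poly_Mapping.keys Q \<and> Poly_Mapping.lookup m n = 0}
        \<subseteq> (\<lambda>m. Poly_Mapping.lookup m 0) ` Poly_Mapping.keys Q" by blast
    then show "finite (insert 0 {Poly_Mapping.lookup m 0 |m. m \<in> Poly_Mapping.keys Q \<and> Poly_Mapping.lookup m n = 0})"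
      by (auto intro: finite_subset)
  next
    fix y assume "y \<in> insert 0 {Poly_Mapping.lookup m 0 |m. m \<in> Poly_Mapping.keys Q \<and> Poly_Mapping.lookup m n = 0}"
    then show "y \<le> D" using leD by auto
  next
    show "D \<in> insert 0 {Poly_Mapping.lookup m 0 |m. m \<in> Poly_Mapping.keys Q \<and> Poly_Mapping.lookup m n = 0}"
      using m1 by auto
  qed
  obtain c where cD: "coeff (QX Q c) D \<noteq> 0"
    using coeff_vanish_false[OF _ m1(1,2)] by blast
  have e1: "int n - (int n - int D) = int D" by simp
  have e2: "int n - (int n - int D) - 1 = int D - 1" by simp
  show "has_deficiency n P (int n - int (xi_degree n Q))"
    unfolding has_deficiency_def xd e1 e2
  proof
    show "apply_op P ` polys_upto (int n) \<subseteq> polys_upto (int D)"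
    proof
      fix g assume "g \<in> apply_op P ` polys_upto (int n)"
      then obtain p where p: "g = apply_op P (poly p)" "p = 0 \<or> int (degree p) \<le> int n"
        unfolding polys_upto_def by blast
      have dp: "degree p \<le> n" using p(2) by auto
      have "g = poly (QX Q (cp p))" using p(1) applyop[OF varsQ PQ dp] by simp
      moreover have "degree (QX Q (cp p)) \<le> D" by (rule degree_QX) (rule leD)
      ultimately show "g \<in> polys_upto (int D)" unfolding polys_upto_def by auto
    qed
  next
    show "\<not> apply_op P ` polys_upto (int n) \<subseteq> polys_upto (int D - 1)"
    proof
      assume sub: "apply_op P ` polys_upto (int n) \<subseteq> polys_upto (int D - 1)"
      define p where "p = Fc n c"
      have dp: "degree p \<le> n" unfolding p_def by (rule degree_Fc)
      have "poly p \<in> polys_upto (int n)" unfolding polys_upto_def using dp by auto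
      then have "apply_op P (poly p) \<in> polys_upto (int D - 1)" using sub by blast
      moreover have "apply_op P (poly p) = poly (QX Q c)"
        using applyop[OF varsQ PQ dp] QX_cong[OF varsQ, of "cp p" c] cp_Fc unfolding p_def by simp
      ultimately obtain q where q: "poly (QX Q c) = poly q" "q = 0 \<or> int (degree q) \<le> int D - 1"
        unfolding polys_upto_def by auto
      have "q = QX Q c" using q(1) by (simp add: poly_eq_poly_eq_iff)
      moreover have "QX Q c \<noteq> 0" using cD by auto
      moreover have "D \<le> degree (QX Q c)" using cD by (rule le_degree)
      ultimately show False using q(2) by auto
    qed
  qed
qed

end
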